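(* Consider the following birational transformations acting on $(q_1,p_1,q_2,p_2,t,s)$ and on parameters $(\alpha_1,\dots,\alpha_6)$ (constrained by $2\alpha_1+\alpha_2+\dots+\alpha_6=1$); each tuple lists images of $(q_1,p_1,q_2,p_2,t,s;\alpha_1,\dots,\alpha_6)$: $w_1$: $(q_1,p_1,q_2,p_2,t,s;\alpha_1+\alpha_2,-\alpha_2,\alpha_3,\alpha_4,\alpha_5,\alpha_6)$; $w_2$: $(q_1,p_1-\frac{\alpha_3}{q_1},q_2,p_2,t,s;\alpha_1+\alpha_3,\alpha_2,-\alpha_3,\alpha_4,\alpha_5,\alpha_6)$; $w_3$: $(q_1,p_1,q_2,p_2-\frac{\alpha_4}{q_2},t,s;\alpha_1+\alpha_4,\alpha_2,\alpha_3,-\alpha_4,\alpha_5,\alpha_6)$; $w_4$: $(q_1,p_1-\frac{\alpha_5}{q_1+q_2-1},q_2,p_2-\frac{\alpha_5}{q_1+q_2-1},t,s;\alpha_1+\alpha_5,\alpha_2,\alpha_3,\alpha_4,-\alpha_5,\alpha_6)$; $w_5$: $(q_1,p_1-\frac{\alpha_6}{q_1+tq_2/s-t},q_2,p_2-\frac{\alpha_6t}{s(q_1+tq_2/s-t)},t,s;\alpha_1+\alpha_6,\alpha_2,\alpha_3,\alpha_4,\alpha_5,-\alpha_6)$; $\pi_1$: with $A=q_1p_1+q_2p_2+\alpha_1$, $A'=A+\alpha_2$: $\big(\frac{p_1(q_1p_1-\alpha_3)}{AA'},-\frac{AA'}{p_1},\frac{p_2(q_2p_2-\alpha_4)}{AA'},-\frac{AA'}{p_2},\frac1t,\frac1s;-\alpha_1-\alpha_2-\alpha_3-\alpha_4,\alpha_2,\alpha_3,\alpha_4,1-\alpha_6,1-\alpha_5\big)$;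 $\pi_2$: $\big(1-q_1-q_2,-p_1,q_2,p_2-p_1,1-t,\frac{(t-1)s}{t-s};\alpha_1,\alpha_2,\alpha_5,\alpha_4,\alpha_3,\alpha_6\big)$; $\pi_3$: $\big(\frac{-sq_1-tq_2+ts}{(t-1)s},-(t-1)p_1,\frac{(t-s)q_2}{(t-1)s},-\frac{(t-1)(tp_1-sp_2)}{t-s},\frac{t}{t-1},\frac{t-s}{t-1};\alpha_1,\alpha_2,\alpha_6,\alpha_4,\alpha_5,\alpha_3\big)$; $\pi_4$: $\big(\frac{q_1}{t},tp_1,\frac{q_2}{s},sp_2,\frac1t,\frac1s;\alpha_1,\alpha_2,\alpha_3,\alpha_4,\alpha_6,\alpha_5\big)$; $\pi_5$: $\big(-\frac{q_1}{q_2},-p_1q_2,\frac1{q_2},-(q_2p_2+q_1p_1+\alpha_1)q_2,\frac{t}{s},\frac1s;\alpha_1,\alpha_4,\alpha_3,\alpha_2,\alpha_5,\alpha_6\big)$; $\pi_6$: $(q_2,p_2,q_1,p_1,s,t;\alpha_1,\alpha_2,\alpha_4,\alpha_3,\alpha_5,\alpha_6)$. Further, with $\gamma_0=1-\alpha_5-\alpha_6$, $\gamma_1=\alpha_6-\alpha_5$, $\gamma_2=\alpha_5-\alpha_2$, $\gamma_3=\alpha_2-\alpha_3$, $\gamma_4=\alpha_3-\alpha_4$, $\gamma_5=\alpha_4$ (so that $\alpha$'s are recovered from $\gamma$'s), define transformations $s_0,\dots,s_5$ (tuples list images of $(q_1,p_1,q_2,p_2,t,s;\gamma_0,\dots,\gamma_5)$),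 writing $E=2q_1p_1+2q_2p_2+\gamma_0-\gamma_3-2\gamma_4-3\gamma_5$, $F=2q_1p_1+2q_2p_2+\gamma_0+\gamma_3-\gamma_5$, $G=q_1p_1+q_2p_2+\frac{\gamma_0-\gamma_3-2\gamma_4-3\gamma_5}{2}$: $s_0$: $\big(\frac{4p_1(q_1p_1-\gamma_4-\gamma_5)}{EF},-\frac{EF}{4p_1},\frac{4p_2(q_2p_2-\gamma_5)}{EF},-\frac{EF}{4p_2},\frac1t,\frac1s;-\gamma_0,\gamma_1,\gamma_2+\gamma_0,\gamma_3,\gamma_4,\gamma_5\big)$; $s_1$: $\big(\frac{q_1}{t},tp_1,\frac{q_2}{s},sp_2,\frac1t,\frac1s;\gamma_0,-\gamma_1,\gamma_2+\gamma_1,\gamma_3,\gamma_4,\gamma_5\big)$; $s_2$: $\big(\frac{q_1}{q_1+q_2-1},(p_1-G)(q_1+q_2-1),\frac{q_2}{q_1+q_2-1},(p_2-G)(q_1+q_2-1),\frac{t}{t-1},\frac{s}{s-1};\gamma_0+\gamma_2,\gamma_1+\gamma_2,-\gamma_2,\gamma_3+\gamma_2,\gamma_4,\gamma_5\big)$; $s_3$: $\big(\frac1{q_1},-Gq_1,-\frac{q_2}{q_1},-q_1p_2,\frac1t,\frac{s}{t};\gamma_0,\gamma_1,\gamma_2+\gamma_3,-\gamma_3,\gamma_4+\gamma_3,\gamma_5\big)$; $s_4$: $(q_2,p_2,q_1,p_1,s,t;\gamma_0,\gamma_1,\gamma_2,\gamma_3+\gamma_4,-\gamma_4,\gamma_5+\gamma_4)$;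 $s_5$: $\big(q_1,p_1,q_2,p_2-\frac{\gamma_5}{q_2},t,s;\gamma_0,\gamma_1,\gamma_2,\gamma_3,\gamma_4+2\gamma_5,-\gamma_5\big)$. Then the group generated by $s_0,\dots,s_5$ (an affine Weyl group of type $B_5^{(1)}$) equals the group generated by $w_1,\dots,w_5,\pi_1,\dots,\pi_6$.
   Context: All these transformations are regarded as birational automorphisms of the space of variables $(q_1,p_1,q_2,p_2,t,s)$ together with parameters; the transformations $s_i$ are written in the parameters $\gamma_i$, which are linear functions of the $\alpha_i$ as given, and act on the $\alpha_i$ through this correspondence. Group equality means each generator of one family is a composition of generators of the other family. *)

theory Defs
  imports Complex_Main
begin

datatype pt = Pt complex complex complex complex complex complex
                 complex complex complex complex complex complex

definition coords :: "pt \<Rightarrow> complex list" where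
  "coords x = (case x of Pt q1 p1 q2 p2 t s a1 a2 a3 a4 a5 a6 \<Rightarrow>
      [q1, p1, q2, p2, t, s, a1, a2, a3, a4, a5, a6])"

definition onM :: "pt \<Rightarrow> bool" where
  "onM x = (case x of Pt q1 p1 q2 p2 t s a1 a2 a3 a4 a5 a6 \<Rightarrow>
      2*a1 + a2 + a3 + a4 + a5 + a6 = 1)"

inductive poly_fun :: "(pt \<Rightarrow> complex) \<Rightarrow> bool" where
  pf_const: "poly_fun (\<lambda>_. c)"
| pf_coord: "i < 12 \<Longrightarrow> poly_fun (\<lambda>x. coords x ! i)"
| pf_add: "poly_fun f \<Longrightarrow> poly_fun g \<Longrightarrow> poly_fun (\<lambda>x. f x + g x)"
| pf_mult: "poly_fun f \<Longrightarrow> poly_fun g \<Longrightarrow> poly_fun (\<lambda>x. f x * g x)"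

text \<open>Equality as rational (birational) maps on the parameter hyperplane:
  the two total functions agree outside the zero set of some polynomial
  that does not vanish identically on the hyperplane.\<close>
definition rat_eq :: "(pt \<Rightarrow> pt) \<Rightarrow> (pt \<Rightarrow> pt) \<Rightarrow> bool" where
  "rat_eq f g = (\<exists>P. poly_fun P \<and> (\<exists>x. onM x \<and> P x \<noteq> 0) \<and>
                    (\<forall>x. onM x \<and> P x \<noteq> 0 \<longrightarrow> f x = g x))"

definition comp_word :: "(pt \<Rightarrow> pt) list \<Rightarrow> pt \<Rightarrow> pt" where
  "comp_word ws = foldr (\<circ>) ws id"

definition gens_in :: "(pt \<Rightarrow> pt) list \<Rightarrow> (pt \<Rightarrow> pt) list \<Rightarrow> bool" where
  "gens_in G H = (\<forall>g \<in> set G. \<exists>ws. set ws \<subseteq> set H \<and> rat_eq g (comp_word ws))"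

definition w1 :: "pt \<Rightarrow> pt" where
  "w1 x = (case x of Pt q1 p1 q2 p2 t s a1 a2 a3 a4 a5 a6 \<Rightarrow>
     Pt q1 p1 q2 p2 t s (a1 + a2) (- a2) a3 a4 a5 a6)"

definition w2 :: "pt \<Rightarrow> pt" where
  "w2 x = (case x of Pt q1 p1 q2 p2 t s a1 a2 a3 a4 a5 a6 \<Rightarrow>
     Pt q1 (p1 - a3 / q1) q2 p2 t s (a1 + a3) a2 (- a3) a4 a5 a6)"

definition w3 :: "pt \<Rightarrow> pt" where
  "w3 x = (case x of Pt q1 p1 q2 p2 t s a1 a2 a3 a4 a5 a6 \<Rightarrow>
     Pt q1 p1 q2 (p2 - a4 / q2) t s (a1 + a4) a2 a3 (- a4) a5 a6)"

definition w4 :: "pt \<Rightarrow> pt" where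
  "w4 x = (case x of Pt q1 p1 q2 p2 t s a1 a2 a3 a4 a5 a6 \<Rightarrow>
     Pt q1 (p1 - a5 / (q1 + q2 - 1)) q2 (p2 - a5 / (q1 + q2 - 1)) t s
        (a1 + a5) a2 a3 a4 (- a5) a6)"

definition w5 :: "pt \<Rightarrow> pt" where
  "w5 x = (case x of Pt q1 p1 q2 p2 t s a1 a2 a3 a4 a5 a6 \<Rightarrow>
     Pt q1 (p1 - a6 / (q1 + t * q2 / s - t)) q2
        (p2 - a6 * t / (s * (q1 + t * q2 / s - t))) t s
        (a1 + a6) a2 a3 a4 a5 (- a6))"

definition pi1 :: "pt \<Rightarrow> pt" where
  "pi1 x = (case x of Pt q1 p1 q2 p2 t s a1 a2 a3 a4 a5 a6 \<Rightarrow>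
     let A = q1 * p1 + q2 * p2 + a1; A' = A + a2 in
     Pt (p1 * (q1 * p1 - a3) / (A * A')) (- (A * A') / p1)
        (p2 * (q2 * p2 - a4) / (A * A')) (- (A * A') / p2)
        (1 / t) (1 / s)
        (- a1 - a2 - a3 - a4) a2 a3 a4 (1 - a6) (1 - a5))"

definition pi2 :: "pt \<Rightarrow> pt" where
  "pi2 x = (case x of Pt q1 p1 q2 p2 t s a1 a2 a3 a4 a5 a6 \<Rightarrow>
     Pt (1 - q1 - q2) (- p1) q2 (p2 - p1) (1 - t) ((t - 1) * s / (t - s))
        a1 a2 a5 a4 a3 a6)"

definition pi3 :: "pt \<Rightarrow> pt" where
  "pi3 x = (case x of Pt q1 p1 q2 p2 t s a1 a2 a3 a4 a5 a6 \<Rightarrow>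
     Pt ((- s * q1 - t * q2 + t * s) / ((t - 1) * s)) (- (t - 1) * p1)
        ((t - s) * q2 / ((t - 1) * s)) (- (t - 1) * (t * p1 - s * p2) / (t - s))
        (t / (t - 1)) ((t - s) / (t - 1))
        a1 a2 a6 a4 a5 a3)"

definition pi4 :: "pt \<Rightarrow> pt" where
  "pi4 x = (case x of Pt q1 p1 q2 p2 t s a1 a2 a3 a4 a5 a6 \<Rightarrow>
     Pt (q1 / t) (t * p1) (q2 / s) (s * p2) (1 / t) (1 / s)
        a1 a2 a3 a4 a6 a5)"

definition pi5 :: "pt \<Rightarrow> pt" where
  "pi5 x = (case x of Pt q1 p1 q2 p2 t s a1 a2 a3 a4 a5 a6 \<Rightarrow>
     Pt (- q1 / q2) (- p1 * q2) (1 / q2) (- (q2 * p2 + q1 * p1 + a1) * q2)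
        (t / s) (1 / s)
        a1 a4 a3 a2 a5 a6)"

definition pi6 :: "pt \<Rightarrow> pt" where
  "pi6 x = (case x of Pt q1 p1 q2 p2 t s a1 a2 a3 a4 a5 a6 \<Rightarrow>
     Pt q2 p2 q1 p1 s t a1 a2 a4 a3 a5 a6)"

text \<open>Gamma parameters:
  g0 = 1 - a5 - a6, g1 = a6 - a5, g2 = a5 - a2, g3 = a2 - a3, g4 = a3 - a4, g5 = a4.
  Conversely a4 = g5, a3 = g4 + g5, a2 = g3 + a3, a5 = g2 + a2, a6 = g1 + a5,
  and a1 is recovered from the constraint 2 a1 + a2 + ... + a6 = 1
  (the new g0 is then determined consistently on the constraint hyperplane).\<close>
definition mkg :: "complex \<Rightarrow> complex \<Rightarrow> complex \<Rightarrow> complex \<Rightarrow> complex \<Rightarrow> complex \<Rightarrow>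
    complex \<Rightarrow> complex \<Rightarrow> complex \<Rightarrow> complex \<Rightarrow> complex \<Rightarrow> complex \<Rightarrow> pt" where
  "mkg q1 p1 q2 p2 t s g0 g1 g2 g3 g4 g5 =
     (let b4 = g5; b3 = g4 + b4; b2 = g3 + b3; b5 = g2 + b2; b6 = g1 + b5;
          b1 = (1 - b2 - b3 - b4 - b5 - b6) / 2
      in Pt q1 p1 q2 p2 t s b1 b2 b3 b4 b5 b6)"

definition s0 :: "pt \<Rightarrow> pt" where
  "s0 x = (case x of Pt q1 p1 q2 p2 t s a1 a2 a3 a4 a5 a6 \<Rightarrow>
     let g0 = 1 - a5 - a6; g1 = a6 - a5; g2 = a5 - a2; g3 = a2 - a3; g4 = a3 - a4; g5 = a4;
         E = 2 * q1 * p1 + 2 * q2 * p2 + g0 - g3 - 2 * g4 - 3 * g5;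
         F = 2 * q1 * p1 + 2 * q2 * p2 + g0 + g3 - g5
     in mkg (4 * p1 * (q1 * p1 - g4 - g5) / (E * F)) (- (E * F) / (4 * p1))
            (4 * p2 * (q2 * p2 - g5) / (E * F)) (- (E * F) / (4 * p2))
            (1 / t) (1 / s)
            (- g0) g1 (g2 + g0) g3 g4 g5)"

definition s1 :: "pt \<Rightarrow> pt" where
  "s1 x = (case x of Pt q1 p1 q2 p2 t s a1 a2 a3 a4 a5 a6 \<Rightarrow>
     let g0 = 1 - a5 - a6; g1 = a6 - a5; g2 = a5 - a2; g3 = a2 - a3; g4 = a3 - a4; g5 = a4
     in mkg (q1 / t) (t * p1) (q2 / s) (s * p2) (1 / t) (1 / s)
            g0 (- g1) (g2 + g1) g3 g4 g5)"

definition s2 :: "pt \<Rightarrow> pt" where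
  "s2 x = (case x of Pt q1 p1 q2 p2 t s a1 a2 a3 a4 a5 a6 \<Rightarrow>
     let g0 = 1 - a5 - a6; g1 = a6 - a5; g2 = a5 - a2; g3 = a2 - a3; g4 = a3 - a4; g5 = a4;
         G = q1 * p1 + q2 * p2 + (g0 - g3 - 2 * g4 - 3 * g5) / 2
     in mkg (q1 / (q1 + q2 - 1)) ((p1 - G) * (q1 + q2 - 1))
            (q2 / (q1 + q2 - 1)) ((p2 - G) * (q1 + q2 - 1))
            (t / (t - 1)) (s / (s - 1))
            (g0 + g2) (g1 + g2) (- g2) (g3 + g2) g4 g5)"

definition s3 :: "pt \<Rightarrow> pt" where
  "s3 x = (case x of Pt q1 p1 q2 p2 t s a1 a2 a3 a4 a5 a6 \<Rightarrow>
     let g0 = 1 - a5 - a6; g1 = a6 - a5; g2 = a5 - a2; g3 = a2 - a3; g4 = a3 - a4; g5 = a4;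
         G = q1 * p1 + q2 * p2 + (g0 - g3 - 2 * g4 - 3 * g5) / 2
     in mkg (1 / q1) (- G * q1) (- q2 / q1) (- q1 * p2) (1 / t) (s / t)
            g0 g1 (g2 + g3) (- g3) (g4 + g3) g5)"

definition s4 :: "pt \<Rightarrow> pt" where
  "s4 x = (case x of Pt q1 p1 q2 p2 t s a1 a2 a3 a4 a5 a6 \<Rightarrow>
     let g0 = 1 - a5 - a6; g1 = a6 - a5; g2 = a5 - a2; g3 = a2 - a3; g4 = a3 - a4; g5 = a4
     in mkg q2 p2 q1 p1 s t
            g0 g1 g2 (g3 + g4) (- g4) (g5 + g4))"

definition s5 :: "pt \<Rightarrow> pt" where
  "s5 x = (case x of Pt q1 p1 q2 p2 t s a1 a2 a3 a4 a5 a6 \<Rightarrow>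
     let g0 = 1 - a5 - a6; g1 = a6 - a5; g2 = a5 - a2; g3 = a2 - a3; g4 = a3 - a4; g5 = a4
     in mkg q1 p1 q2 (p2 - g5 / q2) t s
            g0 g1 g2 g3 (g4 + 2 * g5) (- g5))"

end

theory Submission imports Defs begin

definition Q :: "nat \<Rightarrow> pt \<Rightarrow> complex" where "Q i x = coords x ! i"

lemma Q_Pt[simp]:
  "Q 0 (Pt q1 p1 q2 p2 t s a1 a2 a3 a4 a5 a6) = q1"
  "Q 1 (Pt q1 p1 q2 p2 t s a1 a2 a3 a4 a5 a6) = p1"
  "Q 2 (Pt q1 p1 q2 p2 t s a1 a2 a3 a4 a5 a6) = q2"
  "Q 3 (Pt q1 p1 q2 p2 t s a1 a2 a3 a4 a5 a6) = p2"
  "Q 4 (Pt q1 p1 q2 p2 t s a1 a2 a3 a4 a5 a6) = t"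
  "Q 5 (Pt q1 p1 q2 p2 t s a1 a2 a3 a4 a5 a6) = s"
  "Q 6 (Pt q1 p1 q2 p2 t s a1 a2 a3 a4 a5 a6) = a1"
  "Q 7 (Pt q1 p1 q2 p2 t s a1 a2 a3 a4 a5 a6) = a2"
  "Q 8 (Pt q1 p1 q2 p2 t s a1 a2 a3 a4 a5 a6) = a3"
  "Q 9 (Pt q1 p1 q2 p2 t s a1 a2 a3 a4 a5 a6) = a4"
  "Q 10 (Pt q1 p1 q2 p2 t s a1 a2 a3 a4 a5 a6) = a5"
  "Q 11 (Pt q1 p1 q2 p2 t s a1 a2 a3 a4 a5 a6) = a6"
  by (simp_all add: Q_def coords_def)

lemma pf_Q: "i < 12 \<Longrightarrow> poly_fun (Q i)"
  using pf_coord[of i] by (simp add: Q_def[abs_def])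

lemma pf_sub: "poly_fun f \<Longrightarrow> poly_fun g \<Longrightarrow> poly_fun (\<lambda>x. f x - g x)"
proof -
  assume "poly_fun f" "poly_fun g"
  then have "poly_fun (\<lambda>x. f x + (\<lambda>_. -1) x * g x)"
    by (intro pf_add pf_mult pf_const)
  then show ?thesis by simp
qed

lemma pf_Q'[intro]: "poly_fun (Q 0)" "poly_fun (Q 1)" "poly_fun (Q 2)" "poly_fun (Q 3)"
  "poly_fun (Q 4)" "poly_fun (Q 5)" "poly_fun (Q 6)" "poly_fun (Q 7)" "poly_fun (Q 8)"
  "poly_fun (Q 9)" "poly_fun (Q 10)" "poly_fun (Q 11)"
  by (auto intro: pf_Q)

lemma rat_eqI:
  assumes "poly_fun P" "onM x0" "P x0 \<noteq> 0" "\<And>x. onM x \<Longrightarrow> P x \<noteq> 0 \<Longrightarrow> f x = g x"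
  shows "rat_eq f g"
  using assms unfolding rat_eq_def by blast

lemma onM_Pt: "onM (Pt q1 p1 q2 p2 t s a1 a2 a3 a4 a5 a6) \<longleftrightarrow> a1 = (1 - a2 - a3 - a4 - a5 - a6)/2"
  by (auto simp: onM_def field_simps)

definition S2 :: "pt \<Rightarrow> pt" where
  "S2 x = (case x of Pt q1 p1 q2 p2 t s a1 a2 a3 a4 a5 a6 \<Rightarrow>
     let A = q1 * p1 + q2 * p2 + a1; D = q1 + q2 - 1 in
     Pt (q1 / D) ((p1 - A) * D) (q2 / D) ((p2 - A) * D) (t / (t - 1)) (s / (s - 1))
        a1 a5 a3 a4 a2 a6)"

definition S3 :: "pt \<Rightarrow> pt" where
  "S3 x = (case x of Pt q1 p1 q2 p2 t s a1 a2 a3 a4 a5 a6 \<Rightarrow>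
     let A = q1 * p1 + q2 * p2 + a1 in
     Pt (1 / q1) (- A * q1) (- q2 / q1) (- q1 * p2) (1 / t) (s / t)
        a1 a3 a2 a4 a5 a6)"

lemma L1:
  assumes nz: "q1\<noteq>0" "q1+q2-1\<noteq>0" "t\<noteq>0" "t-1\<noteq>0" "s-1\<noteq>0" "t-s\<noteq>0" "s\<noteq>0"
  shows "S2 (S3 (S2 (Pt q1 p1 q2 p2 t s a1 a2 a3 a4 a5 a6))) = pi2 (Pt q1 p1 q2 p2 t s a1 a2 a3 a4 a5 a6)"
proof -
  define A where "A = q1 * p1 + q2 * p2 + a1"
  define D where "D = q1 + q2 - 1"
  have D: "D \<noteq> 0" using nz by (simp add: D_def)
  have 1: "S2 (Pt q1 p1 q2 p2 t s a1 a2 a3 a4 a5 a6) = Pt (q1 / D) ((p1 - A) * D) (q2 / D) ((p2 - A) * D) (t / (t - 1)) (s / (s - 1))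
        a1 a5 a3 a4 a2 a6" by (simp add: S2_def A_def D_def Let_def)
  have A1: "q1 / D * ((p1 - A) * D) + q2 / D * ((p2 - A) * D) + a1 = - A * D"
  proof -
    have "q1 / D * ((p1 - A) * D) + q2 / D * ((p2 - A) * D) + a1 = q1 * (p1 - A) + q2 * (p2 - A) + a1" using D by simp
    also have "\<dots> = - A * D" by (simp add: A_def D_def algebra_simps)
    finally show ?thesis .
  qed
  have 2: "S3 (Pt (q1 / D) ((p1 - A) * D) (q2 / D) ((p2 - A) * D) (t / (t - 1)) (s / (s - 1)) a1 a5 a3 a4 a2 a6)
     = Pt (D/q1) (A*q1) (-q2/q1) (-q1*(p2-A)) ((t-1)/t) (s*(t-1)/((s-1)*t)) a1 a3 a5 a4 a2 a6"
    unfolding S3_def Let_def pt.case A1 using nz D by (simp add: field_simps)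
  have A2: "D/q1 * (A*q1) + (-q2/q1) * (-q1*(p2-A)) + a1 = q1 * (A - p1)"
    using nz by (simp add: A_def D_def field_simps)
  have D2: "D/q1 + (-q2/q1) - 1 = -1/q1" using nz by (simp add: D_def field_simps)
  have Ds: "s*(t-1)/((s-1)*t) - 1 = (t-s)/((s-1)*t)" using nz by (simp add: field_simps)
  have Sc: "s*(t-1)/((s-1)*t) / (s*(t-1)/((s-1)*t) - 1) = (t - 1) * s / (t - s)"
    using nz by (simp add: divide_simps, (simp add: algebra_simps)?)
  have 3: "S2 (Pt (D/q1) (A*q1) (-q2/q1) (-q1*(p2-A)) ((t-1)/t) (s*(t-1)/((s-1)*t)) a1 a3 a5 a4 a2 a6)
     = Pt (1 - q1 - q2) (- p1) q2 (p2 - p1) (1 - t) ((t - 1) * s / (t - s)) a1 a2 a5 a4 a3 a6"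
    unfolding S2_def Let_def pt.case A2 D2 Sc using nz
    apply (simp only: pt.inject)
    apply (intro conjI)
    apply (simp_all add: D_def divide_simps)
    apply (simp_all add: algebra_simps)?
    done
  show ?thesis unfolding 1 2 3 by (simp add: pi2_def)
qed


lemma L2:
  assumes nz: "q1+q2-1\<noteq>0" "t\<noteq>0" "t-1\<noteq>0" "s-1\<noteq>0" "t-s\<noteq>0"
  shows "pi2 (S3 (pi2 (Pt q1 p1 q2 p2 t s a1 a2 a3 a4 a5 a6))) = S2 (Pt q1 p1 q2 p2 t s a1 a2 a3 a4 a5 a6)"
proof -
  define A where "A = q1 * p1 + q2 * p2 + a1"
  define D where "D = q1 + q2 - 1"
  have D: "D \<noteq> 0" using nz by (simp add: D_def)
  have 1: "pi2 (Pt q1 p1 q2 p2 t s a1 a2 a3 a4 a5 a6) = Pt (-D) (-p1) q2 (p2-p1) (1-t) ((t-1)*s/(t-s)) a1 a2 a5 a4 a3 a6"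
    by (simp add: pi2_def D_def)
  have A1: "-D * - p1 + q2 * (p2 - p1) + a1 = A - p1" by (simp add: A_def D_def algebra_simps)
  have 2: "S3 (Pt (-D) (-p1) q2 (p2-p1) (1-t) ((t-1)*s/(t-s)) a1 a2 a5 a4 a3 a6)
     = Pt (-1/D) ((A-p1)*D) (q2/D) (D*(p2-p1)) (1/(1-t)) (s/(s-t)) a1 a5 a2 a4 a3 a6"
    unfolding S3_def Let_def pt.case A1 using nz D
    apply (simp only: pt.inject)
    apply (intro conjI)
    apply (simp_all add: divide_simps)
    apply (simp_all add: algebra_simps)?
    done
  have 3: "pi2 (Pt (-1/D) ((A-p1)*D) (q2/D) (D*(p2-p1)) (1/(1-t)) (s/(s-t)) a1 a5 a2 a4 a3 a6)
     = Pt (q1 / D) ((p1 - A) * D) (q2 / D) ((p2 - A) * D) (t / (t - 1)) (s / (s - 1)) a1 a5 a3 a4 a2 a6"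
  proof -
    have e: "1 / (1 - t) - s / (s - t) = t*(s-1)/((1-t)*(s-t))" using nz
      by (simp add: divide_simps, (simp add: algebra_simps)?)
    show ?thesis
    unfolding pi2_def pt.case e using nz D
    apply (simp only: pt.inject)
    apply (intro conjI)
    apply (simp_all add: D_def divide_simps)
    apply (simp_all add: algebra_simps)?
    done
  qed
  show ?thesis unfolding 1 2 3 by (simp add: S2_def A_def D_def Let_def)
qed

lemma L3:
  assumes nz: "q1\<noteq>0" "t\<noteq>0"
  shows "S3 (w2 (S3 (Pt q1 p1 q2 p2 t s a1 a2 a3 a4 a5 a6))) = w1 (Pt q1 p1 q2 p2 t s a1 a2 a3 a4 a5 a6)"
proof -
  define A where "A = q1 * p1 + q2 * p2 + a1"
  have 1: "w2 (S3 (Pt q1 p1 q2 p2 t s a1 a2 a3 a4 a5 a6)) = Pt (1/q1) (-(A+a2)*q1) (-q2/q1) (-q1*p2) (1/t) (s/t) (a1+a2) a3 (-a2) a4 a5 a6"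
    using nz by (simp add: S3_def w2_def A_def algebra_simps)
  have A1: "1/q1 * (-(A+a2)*q1) + (-q2/q1) * (-q1*p2) + (a1+a2) = - q1 * p1" using nz
    by (simp add: A_def divide_simps, (simp add: algebra_simps)?)
  show ?thesis unfolding 1 unfolding S3_def Let_def pt.case A1 using nz by (simp add: w1_def)
qed

lemma L4:
  assumes nz: "q1+q2-1\<noteq>0" "t-1\<noteq>0" "s-1\<noteq>0"
  shows "S2 (w1 (S2 (Pt q1 p1 q2 p2 t s a1 a2 a3 a4 a5 a6))) = w4 (Pt q1 p1 q2 p2 t s a1 a2 a3 a4 a5 a6)"
proof -
  define A where "A = q1 * p1 + q2 * p2 + a1"
  define D where "D = q1 + q2 - 1"
  have D: "D \<noteq> 0" using nz by (simp add: D_def)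
  have 1: "w1 (S2 (Pt q1 p1 q2 p2 t s a1 a2 a3 a4 a5 a6)) = Pt (q1 / D) ((p1 - A) * D) (q2 / D) ((p2 - A) * D) (t / (t - 1)) (s / (s - 1))
        (a1+a5) (-a5) a3 a4 a2 a6" by (simp add: S2_def w1_def A_def D_def Let_def)
  have A1: "q1 / D * ((p1 - A) * D) + q2 / D * ((p2 - A) * D) + (a1 + a5) = - A * D + a5"
  proof -
    have "q1 / D * ((p1 - A) * D) + q2 / D * ((p2 - A) * D) + (a1+a5) = q1 * (p1 - A) + q2 * (p2 - A) + (a1+a5)" using D by simp
    also have "\<dots> = - A * D + a5" by (simp add: A_def D_def algebra_simps)
    finally show ?thesis .
  qed
  have D1: "q1 / D + q2 / D - 1 = 1 / D" using D by (simp add: D_def divide_simps)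
  have T1: "t / (t - 1) / (t / (t - 1) - 1) = t" using nz by (simp add: divide_simps)
  have S1: "s / (s - 1) / (s / (s - 1) - 1) = s" using nz by (simp add: divide_simps)
  show ?thesis unfolding 1 unfolding S2_def Let_def pt.case A1 D1 T1 S1 using nz D
    apply (simp only: pt.inject w4_def pt.case)
    apply (intro conjI)
    apply (simp_all add: D_def divide_simps)
    apply (simp_all add: algebra_simps)?
    done
qed

lemma L5:
  assumes nz: "t\<noteq>0" "s\<noteq>0" "t-1\<noteq>0" "t-s\<noteq>0"
  shows "pi4 (pi2 (pi4 (Pt q1 p1 q2 p2 t s a1 a2 a3 a4 a5 a6))) = pi3 (Pt q1 p1 q2 p2 t s a1 a2 a3 a4 a5 a6)"
proof -
  have 1: "pi2 (pi4 (Pt q1 p1 q2 p2 t s a1 a2 a3 a4 a5 a6)) = Pt ((t*s - s*q1 - t*q2)/(t*s)) (-t*p1) (q2/s) (s*p2 - t*p1) ((t-1)/t) ((t-1)/(t-s)) a1 a2 a6 a4 a3 a5"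
    unfolding pi4_def pi2_def pt.case using nz
    apply (simp only: pt.inject)
    apply (intro conjI)
    apply (simp_all add: divide_simps)
    apply (simp_all add: algebra_simps)?
    done
  show ?thesis unfolding 1 unfolding pi4_def pi3_def pt.case using nz
    apply (simp only: pt.inject)
    apply (intro conjI)
    apply (simp_all add: divide_simps)
    apply (simp_all add: algebra_simps)?
    done
qed

lemma L6:
  assumes nz: "t\<noteq>0" "s\<noteq>0" "q1*s+q2*t-s*t\<noteq>0"
  shows "pi4 (w4 (pi4 (Pt q1 p1 q2 p2 t s a1 a2 a3 a4 a5 a6))) = w5 (Pt q1 p1 q2 p2 t s a1 a2 a3 a4 a5 a6)"
proof -
  define K where "K = q1*s+q2*t-s*t"
  have K: "K \<noteq> 0" using nz by (simp add: K_def)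
  have D1: "q1/t + q2/s - 1 = K/(t*s)" using nz by (simp add: K_def divide_simps, (simp add: algebra_simps)?)
  have D2: "q1 + t * q2 / s - t = K/s" using nz by (simp add: K_def divide_simps, (simp add: algebra_simps)?)
  show ?thesis unfolding pi4_def w4_def w5_def pt.case D1 D2 using nz K
    apply (simp only: pt.inject)
    apply (intro conjI)
    apply (simp_all add: divide_simps)
    apply (simp_all add: algebra_simps)?
    done
qed


lemma L1x: "Q 0 x\<noteq>0 \<Longrightarrow> Q 0 x+Q 2 x-1\<noteq>0 \<Longrightarrow> Q 4 x\<noteq>0 \<Longrightarrow> Q 4 x-1\<noteq>0 \<Longrightarrow> Q 5 x-1\<noteq>0 \<Longrightarrow> Q 4 x-Q 5 x\<noteq>0 \<Longrightarrow> Q 5 x\<noteq>0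
   \<Longrightarrow> S2 (S3 (S2 x)) = pi2 x"
  by (cases x) (auto intro!: L1)
lemma L2x: "Q 0 x+Q 2 x-1\<noteq>0 \<Longrightarrow> Q 4 x\<noteq>0 \<Longrightarrow> Q 4 x-1\<noteq>0 \<Longrightarrow> Q 5 x-1\<noteq>0 \<Longrightarrow> Q 4 x-Q 5 x\<noteq>0
   \<Longrightarrow> pi2 (S3 (pi2 x)) = S2 x"
  by (cases x) (auto intro!: L2)
lemma L3x: "Q 0 x\<noteq>0 \<Longrightarrow> Q 4 x\<noteq>0 \<Longrightarrow> S3 (w2 (S3 x)) = w1 x"
  by (cases x) (auto intro!: L3)
lemma L4x: "Q 0 x+Q 2 x-1\<noteq>0 \<Longrightarrow> Q 4 x-1\<noteq>0 \<Longrightarrow> Q 5 x-1\<noteq>0 \<Longrightarrow> S2 (w1 (S2 x)) = w4 x"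
  by (cases x) (auto intro!: L4)
lemma L5x: "Q 4 x\<noteq>0 \<Longrightarrow> Q 5 x\<noteq>0 \<Longrightarrow> Q 4 x-1\<noteq>0 \<Longrightarrow> Q 4 x-Q 5 x\<noteq>0 \<Longrightarrow> pi4 (pi2 (pi4 x)) = pi3 x"
  by (cases x) (auto intro!: L5)
lemma L6x: "Q 4 x\<noteq>0 \<Longrightarrow> Q 5 x\<noteq>0 \<Longrightarrow> Q 0 x*Q 5 x+Q 2 x*Q 4 x-Q 5 x*Q 4 x\<noteq>0 \<Longrightarrow> pi4 (w4 (pi4 x)) = w5 x"
  by (cases x) (auto intro!: L6)

lemma E1: "pi6 (w3 (pi6 x)) = w2 x" by (cases x) (simp add: pi6_def w3_def w2_def)
lemma E2: "pi6 (pi5 (pi6 x)) = S3 x" by (cases x) (simp add: pi6_def pi5_def S3_def Let_def algebra_simps)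
lemma E3: "pi6 (pi6 x) = x" by (cases x) (simp add: pi6_def)

lemma onM_S2: "onM x \<Longrightarrow> onM (S2 x)" by (cases x) (simp add: onM_def S2_def Let_def algebra_simps)
lemma onM_S3: "onM x \<Longrightarrow> onM (S3 x)" by (cases x) (simp add: onM_def S3_def Let_def algebra_simps)
lemma onM_w1: "onM x \<Longrightarrow> onM (w1 x)" by (cases x) (simp add: onM_def w1_def algebra_simps)
lemma onM_w2: "onM x \<Longrightarrow> onM (w2 x)" by (cases x) (simp add: onM_def w2_def algebra_simps)
lemma onM_w3: "onM x \<Longrightarrow> onM (w3 x)" by (cases x) (simp add: onM_def w3_def algebra_simps)
lemma onM_w4: "onM x \<Longrightarrow> onM (w4 x)" by (cases x) (simp add: onM_def w4_def algebra_simps)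
lemma onM_w5: "onM x \<Longrightarrow> onM (w5 x)" by (cases x) (simp add: onM_def w5_def algebra_simps)
lemma onM_pi1: "onM x \<Longrightarrow> onM (pi1 x)" by (cases x) (simp add: onM_def pi1_def Let_def algebra_simps)
lemma onM_pi2: "onM x \<Longrightarrow> onM (pi2 x)" by (cases x) (simp add: onM_def pi2_def algebra_simps)
lemma onM_pi3: "onM x \<Longrightarrow> onM (pi3 x)" by (cases x) (simp add: onM_def pi3_def algebra_simps)
lemma onM_pi4: "onM x \<Longrightarrow> onM (pi4 x)" by (cases x) (simp add: onM_def pi4_def algebra_simps)
lemma onM_pi5: "onM x \<Longrightarrow> onM (pi5 x)" by (cases x) (simp add: onM_def pi5_def algebra_simps)
lemma onM_pi6: "onM x \<Longrightarrow> onM (pi6 x)" by (cases x) (simp add: onM_def pi6_def algebra_simps)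

lemma s1_eq: assumes "onM x" shows "s1 x = pi4 x"
proof (cases x)
  case (Pt q1 p1 q2 p2 t s a1 a2 a3 a4 a5 a6)
  with assms have a1: "a1 = (1-a2-a3-a4-a5-a6)/2" by (simp add: onM_Pt)
  have G: "q1 * p1 + q2 * p2 + (1 - a5 - a6 - (a2 - a3) - 2 * (a3 - a4) - 3 * a4) / 2 = q1 * p1 + q2 * p2 + a1" by (simp add: a1 field_simps)
  show ?thesis unfolding Pt s1_def pi4_def Let_def pt.case G 
    by (simp add: mkg_def a1 field_simps)
qed
lemma s4_eq: assumes "onM x" shows "s4 x = pi6 x"
proof (cases x)
  case (Pt q1 p1 q2 p2 t s a1 a2 a3 a4 a5 a6)
  with assms have a1: "a1 = (1-a2-a3-a4-a5-a6)/2" by (simp add: onM_Pt)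
  have G: "q1 * p1 + q2 * p2 + (1 - a5 - a6 - (a2 - a3) - 2 * (a3 - a4) - 3 * a4) / 2 = q1 * p1 + q2 * p2 + a1" by (simp add: a1 field_simps)
  show ?thesis unfolding Pt s4_def pi6_def Let_def pt.case G 
    by (simp add: mkg_def a1 field_simps)
qed
lemma s5_eq: assumes "onM x" shows "s5 x = w3 x"
proof (cases x)
  case (Pt q1 p1 q2 p2 t s a1 a2 a3 a4 a5 a6)
  with assms have a1: "a1 = (1-a2-a3-a4-a5-a6)/2" by (simp add: onM_Pt)
  have G: "q1 * p1 + q2 * p2 + (1 - a5 - a6 - (a2 - a3) - 2 * (a3 - a4) - 3 * a4) / 2 = q1 * p1 + q2 * p2 + a1" by (simp add: a1 field_simps)
  show ?thesis unfolding Pt s5_def w3_def Let_def pt.case G 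
    by (simp add: mkg_def a1 field_simps)
qed
lemma s2_eq: assumes "onM x" shows "s2 x = S2 x"
proof (cases x)
  case (Pt q1 p1 q2 p2 t s a1 a2 a3 a4 a5 a6)
  with assms have a1: "a1 = (1-a2-a3-a4-a5-a6)/2" by (simp add: onM_Pt)
  have G: "q1 * p1 + q2 * p2 + (1 - a5 - a6 - (a2 - a3) - 2 * (a3 - a4) - 3 * a4) / 2 = q1 * p1 + q2 * p2 + a1" by (simp add: a1 field_simps)
  show ?thesis unfolding Pt s2_def S2_def Let_def pt.case G 
    by (simp add: mkg_def a1 field_simps)
qed
lemma s3_eq: assumes "onM x" shows "s3 x = S3 x"
proof (cases x)
  case (Pt q1 p1 q2 p2 t s a1 a2 a3 a4 a5 a6)
  with assms have a1: "a1 = (1-a2-a3-a4-a5-a6)/2" by (simp add: onM_Pt)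
  have G: "q1 * p1 + q2 * p2 + (1 - a5 - a6 - (a2 - a3) - 2 * (a3 - a4) - 3 * a4) / 2 = q1 * p1 + q2 * p2 + a1" by (simp add: a1 field_simps)
  show ?thesis unfolding Pt s3_def S3_def Let_def pt.case G 
    by (simp add: mkg_def a1 field_simps)
qed
lemma s0_eq: assumes "onM x" shows "s0 x = pi1 x"
proof (cases x)
  case (Pt q1 p1 q2 p2 t s a1 a2 a3 a4 a5 a6)
  with assms have a1: "a1 = (1-a2-a3-a4-a5-a6)/2" by (simp add: onM_Pt)
  have G: "q1 * p1 + q2 * p2 + (1 - a5 - a6 - (a2 - a3) - 2 * (a3 - a4) - 3 * a4) / 2 = q1 * p1 + q2 * p2 + a1" by (simp add: a1 field_simps)
  have EF: "(2 * q1 * p1 + 2 * q2 * p2 + (1 - a5 - a6) - (a2 - a3) - 2 * (a3 - a4) - 3 * a4) *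
           (2 * q1 * p1 + 2 * q2 * p2 + (1 - a5 - a6) + (a2 - a3) - a4) = 4 * ((q1 * p1 + q2 * p2 + a1) * (q1 * p1 + q2 * p2 + a1 + a2))"
    by (simp add: a1 field_simps)
  show ?thesis unfolding Pt s0_def pi1_def Let_def pt.case G EF
    apply (simp only: mkg_def Let_def pt.inject)
    apply (intro conjI)
    apply (simp_all add: a1)
    apply (simp_all add: field_simps)?
    done
qed


definition P0 :: "pt \<Rightarrow> complex" where
  "P0 x = Q 0 x * Q 2 x * (Q 0 x + Q 2 x - 1) * Q 4 x * (Q 4 x - 1) * Q 5 x * (Q 5 x - 1) * (Q 4 x - Q 5 x)
     * (Q 0 x * Q 5 x + Q 2 x * Q 4 x - Q 5 x * Q 4 x)"

lemma rat_eq_P0: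
  assumes "\<And>x. onM x \<Longrightarrow> P0 x \<noteq> 0 \<Longrightarrow> f x = g x"
  shows "rat_eq f g"
proof (rule rat_eqI[OF _ _ _ assms])
  show "poly_fun P0" unfolding P0_def[abs_def]
    by (intro pf_mult pf_sub pf_add pf_const pf_Q')
  show "onM (Pt 2 0 3 0 2 3 (1/2) 0 0 0 0 0)" by (simp add: onM_def)
  show "P0 (Pt 2 0 3 0 2 3 (1/2) 0 0 0 0 0) \<noteq> 0" by (simp add: P0_def)
qed

lemmas onM_all = onM_S2 onM_S3 onM_w1 onM_w2 onM_w3 onM_w4 onM_w5 onM_pi1 onM_pi2 onM_pi3 onM_pi4 onM_pi5 onM_pi6
lemmas s_eqs = s0_eq s1_eq s2_eq s3_eq s4_eq s5_eq

lemma cw: "comp_word ws x = foldr (\<lambda>f y. f y) ws x"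
  unfolding comp_word_def by (induction ws) auto

lemma P0D:
  assumes "P0 (Pt q1 p1 q2 p2 t s a1 a2 a3 a4 a5 a6) \<noteq> 0"
  shows "q1 \<noteq> 0" "q2 \<noteq> 0" "q1 + q2 - 1 \<noteq> 0" "t \<noteq> 0" "t - 1 \<noteq> 0" "s \<noteq> 0" "s - 1 \<noteq> 0" "t - s \<noteq> 0"
    "q1 * s + q2 * t - s * t \<noteq> 0"
  using assms by (auto simp: P0_def)

lemma G_s2: "onM x \<Longrightarrow> P0 x \<noteq> 0 \<Longrightarrow> s2 x = comp_word [pi2, pi6, pi5, pi6, pi2] x"
proof -
  assume m: "onM x" and p: "P0 x \<noteq> 0"
  obtain q1 p1 q2 p2 t s a1 a2 a3 a4 a5 a6 where x: "x = Pt q1 p1 q2 p2 t s a1 a2 a3 a4 a5 a6" by (cases x)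
  note nz = P0D[OF p[unfolded x]]
  have "comp_word [pi2, pi6, pi5, pi6, pi2] x = pi2 (S3 (pi2 x))" by (simp add: cw E2)
  also have "\<dots> = S2 x" by (rule L2x) (use nz in \<open>simp_all add: x\<close>)
  finally show ?thesis using m by (simp add: s2_eq)
qed

lemma G_pi2: "onM x \<Longrightarrow> P0 x \<noteq> 0 \<Longrightarrow> pi2 x = comp_word [s2, s3, s2] x"
proof -
  assume m: "onM x" and p: "P0 x \<noteq> 0"
  obtain q1 p1 q2 p2 t s a1 a2 a3 a4 a5 a6 where x: "x = Pt q1 p1 q2 p2 t s a1 a2 a3 a4 a5 a6" by (cases x)
  note nz = P0D[OF p[unfolded x]]
  have "comp_word [s2, s3, s2] x = S2 (S3 (S2 x))" using m by (simp add: cw s_eqs onM_all)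
  also have "\<dots> = pi2 x" by (rule L1x) (use nz in \<open>simp_all add: x\<close>)
  finally show ?thesis by simp
qed

lemma G_w1: "onM x \<Longrightarrow> P0 x \<noteq> 0 \<Longrightarrow> w1 x = comp_word [s3, s4, s5, s4, s3] x"
proof -
  assume m: "onM x" and p: "P0 x \<noteq> 0"
  obtain q1 p1 q2 p2 t s a1 a2 a3 a4 a5 a6 where x: "x = Pt q1 p1 q2 p2 t s a1 a2 a3 a4 a5 a6" by (cases x)
  note nz = P0D[OF p[unfolded x]]
  have "comp_word [s3, s4, s5, s4, s3] x = S3 (w2 (S3 x))" using m by (simp add: cw s_eqs onM_all E1)
  also have "\<dots> = w1 x" by (rule L3x) (use nz in \<open>simp_all add: x\<close>)
  finally show ?thesis by simp
qed

lemma G_w4: "onM x \<Longrightarrow> P0 x \<noteq> 0 \<Longrightarrow> w4 x = comp_word [s2, s3, s4, s5, s4, s3, s2] x"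
proof -
  assume m: "onM x" and p: "P0 x \<noteq> 0"
  obtain q1 p1 q2 p2 t s a1 a2 a3 a4 a5 a6 where x: "x = Pt q1 p1 q2 p2 t s a1 a2 a3 a4 a5 a6" by (cases x)
  note nz = P0D[OF p[unfolded x]]
  have "comp_word [s2, s3, s4, s5, s4, s3, s2] x = S2 (S3 (w2 (S3 (S2 x))))" using m by (simp add: cw s_eqs onM_all E1)
  also have "\<dots> = S2 (w1 (S2 x))" by (subst L3x) (use nz in \<open>simp_all add: x S2_def Let_def\<close>)
  also have "\<dots> = w4 x" by (rule L4x) (use nz in \<open>simp_all add: x\<close>)
  finally show ?thesis by simp
qed


lemma G_w5: "onM x \<Longrightarrow> P0 x \<noteq> 0 \<Longrightarrow> w5 x = comp_word [s1, s2, s3, s4, s5, s4, s3, s2, s1] x"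
proof -
  assume m: "onM x" and p: "P0 x \<noteq> 0"
  obtain q1 p1 q2 p2 t s a1 a2 a3 a4 a5 a6 where x: "x = Pt q1 p1 q2 p2 t s a1 a2 a3 a4 a5 a6" by (cases x)
  note nz = P0D[OF p[unfolded x]]
  have K: "q1 / t + q2 / s - 1 \<noteq> 0"
  proof
    assume "q1 / t + q2 / s - 1 = 0"
    then have "q1 * s + q2 * t - s * t = 0" using nz by (simp add: divide_simps algebra_simps)
    then show False using nz by simp
  qed
  have "comp_word [s1, s2, s3, s4, s5, s4, s3, s2, s1] x = pi4 (S2 (S3 (w2 (S3 (S2 (pi4 x))))))" using m by (simp add: cw s_eqs onM_all E1)
  also have "\<dots> = pi4 (S2 (w1 (S2 (pi4 x))))" by (subst L3x) (use nz K in \<open>simp_all add: x S2_def pi4_def Let_def\<close>)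
  also have "\<dots> = pi4 (w4 (pi4 x))" by (subst L4x) (use nz K in \<open>simp_all add: x pi4_def\<close>)
  also have "\<dots> = w5 x" by (rule L6x) (use nz in \<open>simp_all add: x\<close>)
  finally show ?thesis by simp
qed

lemma G_pi3: "onM x \<Longrightarrow> P0 x \<noteq> 0 \<Longrightarrow> pi3 x = comp_word [s1, s2, s3, s2, s1] x"
proof -
  assume m: "onM x" and p: "P0 x \<noteq> 0"
  obtain q1 p1 q2 p2 t s a1 a2 a3 a4 a5 a6 where x: "x = Pt q1 p1 q2 p2 t s a1 a2 a3 a4 a5 a6" by (cases x)
  note nz = P0D[OF p[unfolded x]]
  have K: "q1 / t + q2 / s - 1 \<noteq> 0"
  proof
    assume "q1 / t + q2 / s - 1 = 0"
    then have "q1 * s + q2 * t - s * t = 0" using nz by (simp add: divide_simps algebra_simps)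
    then show False using nz by simp
  qed
  have ts: "1 / t - 1 / s \<noteq> 0" using nz by (simp add: divide_simps)
  have t1: "1 / t - 1 \<noteq> 0" "1 / s - 1 \<noteq> 0" using nz by (simp_all add: divide_simps)
  have "comp_word [s1, s2, s3, s2, s1] x = pi4 (S2 (S3 (S2 (pi4 x))))" using m by (simp add: cw s_eqs onM_all)
  also have "\<dots> = pi4 (pi2 (pi4 x))" by (subst L1x) (use nz K ts t1 in \<open>simp_all add: x pi4_def\<close>)
  also have "\<dots> = pi3 x" by (rule L5x) (use nz in \<open>simp_all add: x\<close>)
  finally show ?thesis by simp
qed

lemma G_simple:
  "onM x \<Longrightarrow> s0 x = comp_word [pi1] x"
  "onM x \<Longrightarrow> s1 x = comp_word [pi4] x"
  "onM x \<Longrightarrow> s3 x = comp_word [pi6, pi5, pi6] x"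
  "onM x \<Longrightarrow> s4 x = comp_word [pi6] x"
  "onM x \<Longrightarrow> s5 x = comp_word [w3] x"
  "onM x \<Longrightarrow> w2 x = comp_word [s4, s5, s4] x"
  "onM x \<Longrightarrow> w3 x = comp_word [s5] x"
  "onM x \<Longrightarrow> pi1 x = comp_word [s0] x"
  "onM x \<Longrightarrow> pi4 x = comp_word [s1] x"
  "onM x \<Longrightarrow> pi6 x = comp_word [s4] x"
  by (simp_all add: cw s_eqs onM_all E1 E2)

lemma G_pi5: "onM x \<Longrightarrow> pi5 x = comp_word [s4, s3, s4] x"
proof -
  assume m: "onM x"
  have "comp_word [s4, s3, s4] x = pi6 (S3 (pi6 x))" using m by (simp add: cw s_eqs onM_all)
  also have "\<dots> = pi6 (pi6 (pi5 (pi6 (pi6 x))))" by (simp only: E2)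
  also have "\<dots> = pi5 x" by (simp only: E3)
  finally show ?thesis by simp
qed


lemma RE: "(\<And>x. onM x \<Longrightarrow> P0 x \<noteq> 0 \<Longrightarrow> f x = comp_word ws x) \<Longrightarrow> set ws \<subseteq> H \<Longrightarrow> \<exists>ws. set ws \<subseteq> H \<and> rat_eq f (comp_word ws)"
  using rat_eq_P0 by blast

theorem mainTheorem10:
  shows "gens_in [s0, s1, s2, s3, s4, s5] [w1, w2, w3, w4, w5, pi1, pi2, pi3, pi4, pi5, pi6]
       \<and> gens_in [w1, w2, w3, w4, w5, pi1, pi2, pi3, pi4, pi5, pi6] [s0, s1, s2, s3, s4, s5]"
  unfolding gens_in_def
proof (intro conjI ballI)
  fix g assume "g \<in> set [s0, s1, s2, s3, s4, s5]"
  then show "\<exists>ws. set ws \<subseteq> set [w1, w2, w3, w4, w5, pi1, pi2, pi3, pi4, pi5, pi6] \<and> rat_eq g (comp_word ws)"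
    apply (simp only: set_simps insert_iff empty_iff)
    apply (elim disjE FalseE; hypsubst)
    apply (rule RE, erule G_simple(1), simp)
    apply (rule RE, erule G_simple(2), simp)
    apply (rule RE, erule (1) G_s2, simp)
    apply (rule RE, erule G_simple(3), simp)
    apply (rule RE, erule G_simple(4), simp)
    apply (rule RE, erule G_simple(5), simp)
    done
next
  fix g assume "g \<in> set [w1, w2, w3, w4, w5, pi1, pi2, pi3, pi4, pi5, pi6]"
  then show "\<exists>ws. set ws \<subseteq> set [s0, s1, s2, s3, s4, s5] \<and> rat_eq g (comp_word ws)"
    apply (simp only: set_simps insert_iff empty_iff)
    apply (elim disjE FalseE; hypsubst)
    apply (rule RE, erule (1) G_w1, simp)
    apply (rule RE, erule G_simple(6), simp)
    apply (rule RE, erule G_simple(7), simp)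
    apply (rule RE, erule (1) G_w4, simp)
    apply (rule RE, erule (1) G_w5, simp)
    apply (rule RE, erule G_simple(8), simp)
    apply (rule RE, erule (1) G_pi2, simp)
    apply (rule RE, erule (1) G_pi3, simp)
    apply (rule RE, erule G_simple(9), simp)
    apply (rule RE, erule G_pi5, simp)
    apply (rule RE, erule G_simple(10), simp)
    done
qed

end
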